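(* Consider U-PB$(\hat x_0,\chi,\lambda_0,\bar\varepsilon,\overline N)$ described in the context, and let $i$ be the first iteration of a cycle with prox stepsize $\lambda$. Then: (a) if $\lambda\le(1-\chi)/(2L_f)$, then $t_i\le\frac{4\lambda M_f^2}{1-\chi}$; (b) if $\|x-y\|\le D$ for all $x,y\in\mathrm{dom}\, h$ (for some finite $D$), then $t_i\le\frac{\lambda(16M_f^2+L_f^2D^2)}{4(1-\chi)}$.
   Context: Setting: $f,h:\mathbb{R}^n\to\mathbb{R}\cup\{+\infty\}$ proper lsc convex, $\mathrm{dom}\, h\subseteq\mathrm{dom}\, f$, $\phi=f+h$, $\phi_*=\inf\phi$ attained. Subgradient oracle $f'(x)\in\partial f(x)$ on $\mathrm{dom}\, h$ with $\|f'(x)-f'(y)\|\le2M_f+L_f\|x-y\|$ for $x,y\in\mathrm{dom}\, h$, $M_f,L_f\ge0$. $\ell_f(u;x):=f(x)+\langle f'(x),u-x\rangle$. "Convex function" means proper lsc convex on $\mathbb{R}^n$. In (a), if $L_f=0$ the condition on $\lambda$ is vacuous. BU$(x^c,x,m_f,\lambda)$: given $\lambda>0$, convex $m_f\le f$ with $x=\mathrm{argmin}_u\{m_f(u)+h(u)+\frac1{2\lambda}\|u-x^c\|^2\}$, outputs any convex $m_f^+$ with $\max\{\overline m_f,\ell_f(\cdot;x)\}\le m_f^+\le f$, where $\overline m_f\le f$, $\overline m_f(x)=m_f(x)$ and $x=\mathrm{argmin}_u\{\overline m_f(u)+h(u)+\frac1{2\lambda}\|u-x^c\|^2\}$. U-PB$(\hat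 x_0,\chi,\lambda_0,\bar\varepsilon,\overline N)$, inputs in $\mathrm{dom}\, h\times[0,1)\times\mathbb{R}_{++}\times\mathbb{R}_{++}\times\{1,2,\ldots\}$: Step 0: $\lambda=\lambda_0$, $N=0$, $j=1$, $k=1$; choose convex $f_1$ with $\ell_f(\cdot;\hat x_0)\le f_1\le f$. Step 1: $x_j=\mathrm{argmin}_u\{(f_j+h)(u)+\frac1{2\lambda}\|u-\hat x_{k-1}\|^2\}$; if $\phi(x_j)-\phi_*\le\bar\varepsilon$ stop. Step 2: $\bar\phi_j=\phi(x_j)+\frac\chi{2\lambda}\|x_j-\hat x_{k-1}\|^2$ if $N=0$, else $\bar\phi_j=\min\{\bar\phi_{j-1},\phi(x_j)+\frac\chi{2\lambda}\|x_j-\hat x_{k-1}\|^2\}$; $N=N+1$; $t_j=\bar\phi_j-[(f_j+h)(x_j)+\frac1{2\lambda}\|x_j-\hat x_{k-1}\|^2]$. Step 3: if $t_j>(1-\chi)\bar\varepsilon/2$ and $N<\overline N$: null update $f_{j+1}=\mathrm{BU}(\hat x_{k-1},x_j,f_j,\lambda)$. Otherwise: if $t_j>(1-\chi)\bar\varepsilon/2$ and $N=\overline N$, reset update $\lambda\leftarrow\lambda/2$; else serious update $\hat x_k=x_j$, $\lambda_k=\lambda$, $k\leftarrow k+1$; then set $N=0$ and choose convex $f_{j+1}$ with $\ell_f(\cdot;\hat x_{k-1})\le f_{j+1}\le f$. Step 4: $j\leftarrow j+1$, go to Step 1. A cycle is a reset or serious iteration together with all consecutive null iterations immediately preceding it;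 its iterations share the same prox stepsize $\lambda$ and prox-center $\hat x_{k-1}$, and its first iteration is the one at which $N=0$ when entering Step 2. *)

theory Defs
  imports "HOL-Analysis.Analysis" "HOL-Library.Extended_Real"
begin

text \<open>A function R^n to R \<union> {+\<infinity>} is modelled as 'a \<Rightarrow> ereal never taking the value -\<infinity>.\<close>

definition edom :: "('a \<Rightarrow> ereal) \<Rightarrow> 'a set" where
  "edom F = {x. F x < \<infinity>}"

definition eproper :: "('a \<Rightarrow> ereal) \<Rightarrow> bool" where
  "eproper F \<longleftrightarrow> (\<forall>x. F x \<noteq> -\<infinity>) \<and> (\<exists>x. F x < \<infinity>)"

definition elsc :: "('a::topological_space \<Rightarrow> ereal) \<Rightarrow> bool" where
  "elsc F \<longleftrightarrow> (\<forall>a::ereal. closed {x. F x \<le> a})"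

definition econvex :: "('a::real_vector \<Rightarrow> ereal) \<Rightarrow> bool" where
  "econvex F \<longleftrightarrow> (\<forall>x y t. 0 < t \<and> t < 1 \<longrightarrow>
      F ((1 - t) *\<^sub>R x + t *\<^sub>R y) \<le> ereal (1 - t) * F x + ereal t * F y)"

text \<open>"Convex function" = proper lsc convex function on the whole space.\<close>
definition convex_fun :: "('a::real_normed_vector \<Rightarrow> ereal) \<Rightarrow> bool" where
  "convex_fun F \<longleftrightarrow> eproper F \<and> elsc F \<and> econvex F"

definition subdiff :: "('a::real_inner \<Rightarrow> ereal) \<Rightarrow> 'a \<Rightarrow> 'a set" where
  "subdiff F x = {g. \<forall>u. F u \<ge> F x + ereal (g \<bullet> (u - x))}"

definition lin :: "('a::real_inner \<Rightarrow> ereal) \<Rightarrow> ('a \<Rightarrow> 'a) \<Rightarrow> 'a \<Rightarrow> 'a \<Rightarrow> ereal" where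
  "lin f f' x u = f x + ereal (f' x \<bullet> (u - x))"

definition prox_argmin :: "('a::real_inner \<Rightarrow> ereal) \<Rightarrow> ('a \<Rightarrow> ereal) \<Rightarrow> real \<Rightarrow> 'a \<Rightarrow> 'a \<Rightarrow> bool" where
  "prox_argmin m h lam xc x \<longleftrightarrow>
     (\<forall>u. m x + h x + ereal (norm (x - xc)^2 / (2 * lam)) \<le> m u + h u + ereal (norm (u - xc)^2 / (2 * lam)))"

text \<open>Admissible outputs of BU(xc, x, m, lam): any convex m+ with
  max{mbar, lin(.;x)} \<le> m+ \<le> f, for some mbar \<le> f with mbar(x) = m(x) and
  x = argmin (mbar + h + 1/(2 lam)||. - xc||^2).\<close>
definition BU_out :: "('a::real_inner \<Rightarrow> ereal) \<Rightarrow> ('a \<Rightarrow> 'a) \<Rightarrow> ('a \<Rightarrow> ereal) \<Rightarrow>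
    'a \<Rightarrow> 'a \<Rightarrow> ('a \<Rightarrow> ereal) \<Rightarrow> real \<Rightarrow> ('a \<Rightarrow> ereal) \<Rightarrow> bool" where
  "BU_out f f' h xc x m lam mplus \<longleftrightarrow>
     (\<exists>mbar. (\<forall>u. mbar u \<le> f u) \<and> mbar x = m x \<and> prox_argmin mbar h lam xc x \<and>
        convex_fun mplus \<and> (\<forall>u. max (mbar u) (lin f f' x u) \<le> mplus u \<and> mplus u \<le> f u))"

definition model_ok :: "('a::real_inner \<Rightarrow> ereal) \<Rightarrow> ('a \<Rightarrow> 'a) \<Rightarrow> 'a \<Rightarrow> ('a \<Rightarrow> ereal) \<Rightarrow> bool" where
  "model_ok f f' xc F \<longleftrightarrow> convex_fun F \<and> (\<forall>u. lin f f' xc u \<le> F u \<and> F u \<le> f u)"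

text \<open>Quantities computed in Step 2 at iteration j:
  value v_j = phi(x_j) + chi/(2 lam)||x_j - xc||^2 entering the min defining phibar_j,
  and t_j = phibar_j - [(f_j + h)(x_j) + 1/(2 lam)||x_j - xc||^2].\<close>
definition vval :: "('a::real_inner \<Rightarrow> ereal) \<Rightarrow> ('a \<Rightarrow> ereal) \<Rightarrow> real \<Rightarrow> real \<Rightarrow> 'a \<Rightarrow> 'a \<Rightarrow> ereal" where
  "vval f h chi lam xc x = f x + h x + ereal (chi / (2 * lam) * norm (x - xc)^2)"

definition tval :: "('a::real_inner \<Rightarrow> ereal) \<Rightarrow> ('a \<Rightarrow> ereal) \<Rightarrow> real \<Rightarrow> 'a \<Rightarrow> 'a \<Rightarrow> ereal \<Rightarrow> ereal" where
  "tval F h lam xc x phib = phib - (F x + h x + ereal (norm (x - xc)^2 / (2 * lam)))"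

text \<open>A run of U-PB(x0, chi, lam0, epsbar, Nbar) up to (and including Step 1 of) iteration i.
  For each iteration j \<ge> 1 the trace records: lam j (prox stepsize), c j (prox center hat x_{k-1}),
  F j (model f_j), x j, Nin j (value of the counter N when entering Step 2) and phibar j.\<close>
definition UPB_run ::
  "('a::real_inner \<Rightarrow> ereal) \<Rightarrow> ('a \<Rightarrow> 'a) \<Rightarrow> ('a \<Rightarrow> ereal) \<Rightarrow> real \<Rightarrow>
   'a \<Rightarrow> real \<Rightarrow> real \<Rightarrow> real \<Rightarrow> nat \<Rightarrow>
   (nat \<Rightarrow> real) \<Rightarrow> (nat \<Rightarrow> 'a) \<Rightarrow> (nat \<Rightarrow> 'a \<Rightarrow> ereal) \<Rightarrow> (nat \<Rightarrow> 'a) \<Rightarrow> (nat \<Rightarrow> nat) \<Rightarrow>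
   (nat \<Rightarrow> ereal) \<Rightarrow> nat \<Rightarrow> bool" where
  "UPB_run f f' h phistar x0 chi lam0 epsbar Nbar lam c F x Nin phibar i \<longleftrightarrow>
     lam 1 = lam0 \<and> c 1 = x0 \<and> Nin 1 = 0 \<and> model_ok f f' x0 (F 1) \<and>
     (\<forall>j. 1 \<le> j \<and> j \<le> i \<longrightarrow>
        prox_argmin (F j) h (lam j) (c j) (x j) \<and>
        phibar j = (if Nin j = 0 then vval f h chi (lam j) (c j) (x j)
                    else min (phibar (j - 1)) (vval f h chi (lam j) (c j) (x j)))) \<and>
     (\<forall>j. 1 \<le> j \<and> j < i \<longrightarrow>
        (let t = tval (F j) h (lam j) (c j) (x j) (phibar j);
             thr = ereal ((1 - chi) * epsbar / 2) in
         f (x j) + h (x j) - ereal phistar > ereal epsbar \<and>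
         (if t > thr \<and> Nin j + 1 < Nbar then
            lam (Suc j) = lam j \<and> c (Suc j) = c j \<and> Nin (Suc j) = Nin j + 1 \<and>
            BU_out f f' h (c j) (x j) (F j) (lam j) (F (Suc j))
          else if t > thr \<and> Nin j + 1 = Nbar then
            lam (Suc j) = lam j / 2 \<and> c (Suc j) = c j \<and> Nin (Suc j) = 0 \<and>
            model_ok f f' (c (Suc j)) (F (Suc j))
          else
            lam (Suc j) = lam j \<and> c (Suc j) = x j \<and> Nin (Suc j) = 0 \<and>
            model_ok f f' (c (Suc j)) (F (Suc j)))))"

end

theory Submission
  imports Defs
begin


lemma sum_kp1: "(\<Sum>k<n. real (k+1)) = real n * (real n + 1) / 2"
  by (induction n) (auto simp: field_simps)

lemma key_disc:
  fixes fr :: "'a::real_inner \<Rightarrow> real" and g :: "'a \<Rightarrow> 'a"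
  assumes S: "convex S" and c: "c \<in> S" and x: "x \<in> S"
    and sg: "\<forall>u\<in>S. \<forall>v\<in>S. fr v \<ge> fr u + g u \<bullet> (v - u)"
    and gr: "\<forall>u\<in>S. \<forall>v\<in>S. norm (g u - g v) \<le> 2 * M + L * norm (u - v)"
    and L: "L \<ge> 0" and n: "n \<ge> 1"
  shows "fr x - fr c - g c \<bullet> (x - c) \<le> 2 * M * norm (x - c) + L * norm (x - c)^2 * (real n + 1) / (2 * real n)"
proof -
  define r where "r = norm (x - c)"
  define y where "y k = c + (real k / real n) *\<^sub>R (x - c)" for k
  have np: "real n > 0" using n by simp
  have yS: "y k \<in> S" if "k \<le> n" for k
  proof -
    have "y k = (1 - real k / real n) *\<^sub>R c + (real k / real n) *\<^sub>R x"
      by (simp add: y_def algebra_simps)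
    moreover have "0 \<le> real k / real n" "real k / real n \<le> 1" using that np by auto
    ultimately show ?thesis using S c x by (simp add: convex_alt)
  qed
  have y0: "y 0 = c" and yn: "y n = x" using np by (auto simp: y_def)
  have dy: "y (Suc k) - y k = (1 / real n) *\<^sub>R (x - c)" for k
  proof -
    have e: "real (Suc k) / real n - real k / real n = 1 / real n"
      by (simp add: diff_divide_distrib[symmetric])
    have "y (Suc k) - y k = (real (Suc k) / real n - real k / real n) *\<^sub>R (x - c)"
      by (simp only: y_def scaleR_diff_left) simp
    thus ?thesis by (simp only: e)
  qed
  have nyc: "norm (y (Suc k) - c) = real (k+1) / real n * r" for k
    using np by (simp add: y_def r_def)
  have tel: "fr x - fr c = (\<Sum>k<n. fr (y (Suc k)) - fr (y k))"
    using sum_lessThan_telescope[of "\<lambda>k. fr (y k)" n] y0 yn by simp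
  have lin: "g c \<bullet> (x - c) = (\<Sum>k<n. g c \<bullet> ((1 / real n) *\<^sub>R (x - c)))"
    using np by simp
  have tm: "fr (y (Suc k)) - fr (y k) - g c \<bullet> ((1 / real n) *\<^sub>R (x - c))
      \<le> (2 * M + L * (real (k+1) / real n * r)) * r / real n" if "k < n" for k
  proof -
    have s1: "y (Suc k) \<in> S" "y k \<in> S" using yS that by auto
    have "fr (y k) \<ge> fr (y (Suc k)) + g (y (Suc k)) \<bullet> (y k - y (Suc k))"
      using sg s1 by blast
    hence "fr (y (Suc k)) - fr (y k) \<le> g (y (Suc k)) \<bullet> (y (Suc k) - y k)"
      by (simp add: inner_diff_right)
    hence "fr (y (Suc k)) - fr (y k) - g c \<bullet> ((1 / real n) *\<^sub>R (x - c))
       \<le> (g (y (Suc k)) - g c) \<bullet> ((1 / real n) *\<^sub>R (x - c))"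
      by (simp add: dy inner_diff_left diff_divide_distrib)
    also have "\<dots> \<le> norm (g (y (Suc k)) - g c) * norm ((1 / real n) *\<^sub>R (x - c))"
      by (rule norm_cauchy_schwarz)
    also have "norm ((1 / real n) *\<^sub>R (x - c)) = r / real n" using np by (simp add: r_def)
    also have "norm (g (y (Suc k)) - g c) * (r / real n) \<le> (2 * M + L * (real (k+1) / real n * r)) * (r / real n)"
    proof (rule mult_right_mono)
      have "norm (g (y (Suc k)) - g c) \<le> 2 * M + L * norm (y (Suc k) - c)" using gr s1(1) c by blast
      thus "norm (g (y (Suc k)) - g c) \<le> 2 * M + L * (real (k+1) / real n * r)" by (simp only: nyc)
      show "0 \<le> r / real n" using np by (simp add: r_def)
    qed
    finally show ?thesis by simp
  qed
  have "fr x - fr c - g c \<bullet> (x - c) = (\<Sum>k<n. fr (y (Suc k)) - fr (y k) - g c \<bullet> ((1 / real n) *\<^sub>R (x - c)))"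
    by (simp only: sum_subtractf tel lin)
  also have "\<dots> \<le> (\<Sum>k<n. (2 * M + L * (real (k+1) / real n * r)) * r / real n)"
    by (rule sum_mono) (use tm in auto)
  also have "\<dots> = (\<Sum>k<n. 2 * M * r / real n + (L * r * r / real n / real n) * real (k+1))"
    by (rule sum.cong) (auto simp: field_simps)
  also have "\<dots> = 2 * M * r + (L * r * r / real n / real n) * (real n * (real n + 1) / 2)"
  proof -
    have "(\<Sum>k<n. 2 * M * r / real n + (L * r * r / real n / real n) * real (k+1))
       = (\<Sum>k<n. 2 * M * r / real n) + (L * r * r / real n / real n) * (\<Sum>k<n. real (k+1))"
      by (simp only: sum.distrib sum_distrib_left)
    also have "(\<Sum>k<n. 2 * M * r / real n) = 2 * M * r" using np by simp
    finally show ?thesis by (simp only: sum_kp1)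
  qed
  also have "\<dots> = 2 * M * r + L * r^2 * (real n + 1) / (2 * real n)"
    using np by (simp add: field_simps power2_eq_square)
  finally show ?thesis by (simp add: r_def)
qed

lemma key_real:
  fixes fr :: "'a::real_inner \<Rightarrow> real" and g :: "'a \<Rightarrow> 'a"
  assumes S: "convex S" and c: "c \<in> S" and x: "x \<in> S"
    and sg: "\<forall>u\<in>S. \<forall>v\<in>S. fr v \<ge> fr u + g u \<bullet> (v - u)"
    and gr: "\<forall>u\<in>S. \<forall>v\<in>S. norm (g u - g v) \<le> 2 * M + L * norm (u - v)"
    and L: "L \<ge> 0"
  shows "fr x - fr c - g c \<bullet> (x - c) \<le> 2 * M * norm (x - c) + L * norm (x - c)^2 / 2"
proof (rule ccontr)
  define X where "X = fr x - fr c - g c \<bullet> (x - c)"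
  define Y where "Y = 2 * M * norm (x - c) + L * norm (x - c)^2 / 2"
  define K where "K = L * norm (x - c)^2 / 2"
  assume "\<not> ?thesis"
  hence XY: "X > Y" by (simp add: X_def Y_def)
  have K0: "K \<ge> 0" using L by (simp add: K_def)
  obtain n :: nat where nb: "real n > K / (X - Y)" using reals_Archimedean2 by blast
  have np: "n \<ge> 1" using nb K0 XY
    by (metis divide_nonneg_pos diff_gt_0_iff_gt less_one not_le of_nat_0 of_nat_le_0_iff order_less_le_trans)
  have "X \<le> Y + K / real n"
    using key_disc[OF S c x sg gr L np] np
    by (simp add: X_def Y_def K_def field_simps)
  moreover have "K / real n < X - Y" using nb XY np
    by (simp add: divide_less_eq mult.commute pos_divide_less_eq)
  ultimately show False by simp
qed



lemma ineq_a:
  fixes lam chi M L r :: real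
  assumes lp: "lam > 0" and b: "chi < 1" and M: "M \<ge> 0" and L: "L \<ge> 0" and r: "r \<ge> 0"
    and cond: "L = 0 \<or> lam \<le> (1 - chi) / (2 * L)"
  shows "2 * M * r + L * r^2 / 2 - (1 - chi) / (2 * lam) * r^2 \<le> 4 * lam * M^2 / (1 - chi)"
proof -
  define b where "b = 1 - chi"
  have bp: "b > 0" using b by (simp add: b_def)
  have c1: "2 * lam * L \<le> b"
  proof (cases "L = 0")
    case True then show ?thesis using bp by simp
  next
    case False
    hence "L > 0" using L by simp
    hence "lam \<le> b / (2 * L)" using cond False by (simp add: b_def)
    thus ?thesis using \<open>L > 0\<close> by (simp add: field_simps)
  qed
  have c2: "lam * b * L * r^2 \<le> b^2 * r^2 / 2"
  proof -
    have "lam * b * L * r^2 = (2 * lam * L) * (b * r^2) / 2" by (simp add: algebra_simps)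
    also have "\<dots> \<le> b * (b * r^2) / 2" using c1 bp by (intro divide_right_mono mult_right_mono) auto
    finally show ?thesis by (simp add: power2_eq_square)
  qed
  have sq: "0 \<le> (b * r - 4 * lam * M)^2 / 2" by simp
  have key: "4 * lam * b * M * r + lam * b * L * r^2 - b^2 * r^2 \<le> 8 * lam^2 * M^2"
    using c2 sq by (simp add: power2_eq_square algebra_simps)
  have "(2 * M * r + L * r^2 / 2 - b / (2 * lam) * r^2) * (2 * lam * b)
        = 4 * lam * b * M * r + lam * b * L * r^2 - b^2 * r^2"
    using lp by (simp add: field_simps power2_eq_square)
  also have "\<dots> \<le> 8 * lam^2 * M^2" by (rule key)
  also have "\<dots> = (4 * lam * M^2 / b) * (2 * lam * b)" using bp by (simp add: field_simps power2_eq_square)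
  finally have "(2 * M * r + L * r^2 / 2 - b / (2 * lam) * r^2) * (2 * lam * b) \<le> (4 * lam * M^2 / b) * (2 * lam * b)" .
  hence "2 * M * r + L * r^2 / 2 - b / (2 * lam) * r^2 \<le> 4 * lam * M^2 / b"
    by (rule mult_right_le_imp_le) (use lp bp in simp)
  thus ?thesis by (simp add: b_def)
qed

lemma ineq_b:
  fixes lam chi M L r D :: real
  assumes lp: "lam > 0" and b: "chi < 1" and M: "M \<ge> 0" and L: "L \<ge> 0" and r: "r \<ge> 0" and rD: "r \<le> D"
  shows "2 * M * r + L * r^2 / 2 - (1 - chi) / (2 * lam) * r^2 \<le> lam * (16 * M^2 + L^2 * D^2) / (4 * (1 - chi))"
proof -
  define b where "b = 1 - chi"
  have bp: "b > 0" using b by (simp add: b_def)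
  have c2: "lam * b * L * r^2 \<le> lam * b * L * D * r"
  proof -
    have "r * r \<le> D * r" using rD r by (rule mult_right_mono)
    hence "(lam * b * L) * (r * r) \<le> (lam * b * L) * (D * r)" using lp bp L by (intro mult_left_mono) auto
    thus ?thesis by (simp add: power2_eq_square algebra_simps)
  qed
  have sq: "0 \<le> (b * r - 4 * lam * M)^2 / 2" by simp
  have sq2: "0 \<le> (b * r - lam * L * D)^2 / 2" by simp
  have key: "4 * lam * b * M * r + lam * b * L * r^2 - b^2 * r^2 \<le> 8 * lam^2 * M^2 + lam^2 * L^2 * D^2 / 2"
    using c2 sq sq2 by (simp add: power2_eq_square algebra_simps)
  have "(2 * M * r + L * r^2 / 2 - b / (2 * lam) * r^2) * (2 * lam * b)
        = 4 * lam * b * M * r + lam * b * L * r^2 - b^2 * r^2"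
    using lp by (simp add: field_simps power2_eq_square)
  also have "\<dots> \<le> 8 * lam^2 * M^2 + lam^2 * L^2 * D^2 / 2" by (rule key)
  also have "\<dots> = (lam * (16 * M^2 + L^2 * D^2) / (4 * b)) * (2 * lam * b)" using bp by (simp add: field_simps power2_eq_square)
  finally have "(2 * M * r + L * r^2 / 2 - b / (2 * lam) * r^2) * (2 * lam * b) \<le> (lam * (16 * M^2 + L^2 * D^2) / (4 * b)) * (2 * lam * b)" .
  hence "2 * M * r + L * r^2 / 2 - b / (2 * lam) * r^2 \<le> lam * (16 * M^2 + L^2 * D^2) / (4 * b)"
    by (rule mult_right_le_imp_le) (use lp bp in simp)
  thus ?thesis by (simp add: b_def)
qed


lemma edom_convex:
  assumes "convex_fun h" shows "convex (edom h)"
  unfolding convex_alt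
proof (intro ballI allI impI)
  fix z y :: 'a and u :: real
  assume z: "z \<in> edom h" and y: "y \<in> edom h" and u: "0 \<le> u \<and> u \<le> 1"
  have pr: "\<forall>x. h x \<noteq> -\<infinity>" and cv: "econvex h" using assms by (auto simp: convex_fun_def eproper_def)
  show "(1 - u) *\<^sub>R z + u *\<^sub>R y \<in> edom h"
  proof (cases "u = 0 \<or> u = 1")
    case True then show ?thesis using z y by auto
  next
    case False
    hence "0 < u" "u < 1" using u by auto
    hence le: "h ((1 - u) *\<^sub>R z + u *\<^sub>R y) \<le> ereal (1 - u) * h z + ereal u * h y"
      using cv unfolding econvex_def by blast
    obtain a where a: "h z = ereal a" using z pr[rule_format, of z] by (cases "h z") (auto simp: edom_def)
    obtain b where b: "h y = ereal b" using y pr[rule_format, of y] by (cases "h y") (auto simp: edom_def)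
    show ?thesis using le a b by (auto simp: edom_def)
  qed
qed

lemma x_in_dom:
  assumes pa: "prox_argmin m h lam xc x" and mf: "\<forall>u. m u \<le> f u" and mp: "\<forall>u. m u \<noteq> -\<infinity>"
    and hc: "convex_fun h" and ds: "edom h \<subseteq> edom f"
  shows "x \<in> edom h"
proof -
  have hp: "\<forall>x. h x \<noteq> -\<infinity>" "\<exists>z. h z < \<infinity>" using hc by (auto simp: convex_fun_def eproper_def)
  then obtain z where z: "h z < \<infinity>" by blast
  hence "f z < \<infinity>" using ds by (auto simp: edom_def)
  hence "m z < \<infinity>" using mf by (metis order.strict_trans1)
  hence "m z + h z + ereal (norm (z - xc)^2 / (2 * lam)) < \<infinity>"
    using z mp hp by (simp add: less_top)
  hence lt: "m x + h x + ereal (norm (x - xc)^2 / (2 * lam)) < \<infinity>"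
    using pa unfolding prox_argmin_def by (meson order.strict_trans1)
  show ?thesis
  proof (rule ccontr)
    assume "x \<notin> edom h"
    hence "h x = \<infinity>" by (simp add: edom_def)
    thus False using lt mp[rule_format, of x] by simp
  qed
qed

theorem lemma4p3:
  fixes f h :: "'a::euclidean_space \<Rightarrow> ereal"
    and f' :: "'a \<Rightarrow> 'a"
    and Mf Lf phistar :: real
    and x0 :: 'a and chi lam0 epsbar :: real and Nbar :: nat
    and lam :: "nat \<Rightarrow> real" and c x :: "nat \<Rightarrow> 'a" and F :: "nat \<Rightarrow> 'a \<Rightarrow> ereal"
    and Nin :: "nat \<Rightarrow> nat" and phibar :: "nat \<Rightarrow> ereal" and i :: nat
  assumes f_cvx: "convex_fun f" and h_cvx: "convex_fun h"
    and dom_sub: "edom h \<subseteq> edom f"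
    and phistar_min: "\<exists>z. f z + h z = ereal phistar" "\<forall>y. ereal phistar \<le> f y + h y"
    and subgrad: "\<forall>z\<in>edom h. f' z \<in> subdiff f z"
    and Mf_nonneg: "Mf \<ge> 0" and Lf_nonneg: "Lf \<ge> 0"
    and growth: "\<forall>z\<in>edom h. \<forall>y\<in>edom h. norm (f' z - f' y) \<le> 2 * Mf + Lf * norm (z - y)"
    and inputs: "x0 \<in> edom h" "0 \<le> chi" "chi < 1" "lam0 > 0" "epsbar > 0" "Nbar \<ge> 1"
    and run: "UPB_run f f' h phistar x0 chi lam0 epsbar Nbar lam c F x Nin phibar i"
    and i_pos: "i \<ge> 1"
    and first: "Nin i = 0"
  shows "((Lf = 0 \<or> lam i \<le> (1 - chi) / (2 * Lf)) \<longrightarrow>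
           tval (F i) h (lam i) (c i) (x i) (phibar i) \<le> ereal (4 * lam i * Mf^2 / (1 - chi))) \<and>
         (\<forall>D::real. (\<forall>z\<in>edom h. \<forall>y\<in>edom h. norm (z - y) \<le> D) \<longrightarrow>
           tval (F i) h (lam i) (c i) (x i) (phibar i)
             \<le> ereal (lam i * (16 * Mf^2 + Lf^2 * D^2) / (4 * (1 - chi))))"
proof -
  note R = run[unfolded UPB_run_def]
  have R1: "lam 1 = lam0" "c 1 = x0" "model_ok f f' x0 (F 1)" using R by auto
  have Rp: "\<forall>j. 1 \<le> j \<and> j \<le> i \<longrightarrow> prox_argmin (F j) h (lam j) (c j) (x j)" using R by blast
  have Rphi: "phibar i = vval f h chi (lam i) (c i) (x i)" using R i_pos first by auto
  note R3 = R[THEN conjunct2, THEN conjunct2, THEN conjunct2, THEN conjunct2, THEN conjunct2]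
  have step: "lam (Suc j) > 0 \<and> c (Suc j) \<in> {c j, x j} \<and> (\<forall>u. F (Suc j) u \<le> f u) \<and> (\<forall>u. F (Suc j) u \<noteq> -\<infinity>)
     \<and> (Nin (Suc j) = 0 \<longrightarrow> model_ok f f' (c (Suc j)) (F (Suc j)))"
    if j: "1 \<le> j" "j < i" "lam j > 0" for j
  proof -
    have S: "(let t = tval (F j) h (lam j) (c j) (x j) (phibar j);
             thr = ereal ((1 - chi) * epsbar / 2) in
         f (x j) + h (x j) - ereal phistar > ereal epsbar \<and>
         (if t > thr \<and> Nin j + 1 < Nbar then
            lam (Suc j) = lam j \<and> c (Suc j) = c j \<and> Nin (Suc j) = Nin j + 1 \<and>
            BU_out f f' h (c j) (x j) (F j) (lam j) (F (Suc j))
          else if t > thr \<and> Nin j + 1 = Nbar then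
            lam (Suc j) = lam j / 2 \<and> c (Suc j) = c j \<and> Nin (Suc j) = 0 \<and>
            model_ok f f' (c (Suc j)) (F (Suc j))
          else
            lam (Suc j) = lam j \<and> c (Suc j) = x j \<and> Nin (Suc j) = 0 \<and>
            model_ok f f' (c (Suc j)) (F (Suc j))))"
      using R3 j by blast
    show ?thesis
      using S j(3) unfolding Let_def
      by (auto simp: BU_out_def model_ok_def convex_fun_def eproper_def split: if_splits)
  qed
  have inv: "lam j > 0 \<and> c j \<in> edom h \<and> (\<forall>u. F j u \<le> f u) \<and> (\<forall>u. F j u \<noteq> -\<infinity>)"
    if "1 \<le> j" "j \<le> i" for j
    using that
  proof (induction j rule: nat_induct_at_least)
    case base
    then show ?case using R1 inputs by (auto simp: model_ok_def convex_fun_def eproper_def)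
  next
    case (Suc j)
    hence IH: "lam j > 0 \<and> c j \<in> edom h \<and> (\<forall>u. F j u \<le> f u) \<and> (\<forall>u. F j u \<noteq> -\<infinity>)" by simp
    have xj: "x j \<in> edom h"
      using x_in_dom[of "F j" h "lam j" "c j" "x j" f] Rp Suc IH h_cvx dom_sub by auto
    show ?case using step[of j] Suc IH xj by auto
  qed
  have invi: "lam i > 0" "c i \<in> edom h" "\<forall>u. F i u \<le> f u" "\<forall>u. F i u \<noteq> -\<infinity>"
    using inv[of i] i_pos by auto
  have Xd: "x i \<in> edom h"
    using x_in_dom[of "F i" h "lam i" "c i" "x i" f] Rp invi i_pos h_cvx dom_sub by auto
  have mok: "model_ok f f' (c i) (F i)"
  proof (cases "i = 1")
    case True then show ?thesis using R1 by simp
  next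
    case False
    then obtain j where ij: "i = Suc j" "1 \<le> j" using i_pos by (metis One_nat_def Suc_pred' less_one not_le_imp_less not_less_eq_eq zero_less_Suc)
    then show ?thesis using step[of j] inv[of j] first by auto
  qed
  define S where "S = edom h"
  define X where "X = x i"
  define C where "C = c i"
  define l where "l = lam i"
  define r where "r = norm (X - C)"
  define fr where "fr u = real_of_ereal (f u)" for u
  have fpr: "\<forall>u. f u \<noteq> -\<infinity>" using f_cvx by (auto simp: convex_fun_def eproper_def)
  have hpr: "\<forall>u. h u \<noteq> -\<infinity>" using h_cvx by (auto simp: convex_fun_def eproper_def)
  have fre: "f u = ereal (fr u)" if "u \<in> S" for u
  proof -
    have "f u < \<infinity>" using that dom_sub by (auto simp: S_def edom_def)
    thus ?thesis using fpr[rule_format, of u] by (cases "f u") (auto simp: fr_def)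
  qed
  have sgr: "\<forall>u\<in>S. \<forall>v\<in>S. fr v \<ge> fr u + f' u \<bullet> (v - u)"
  proof (intro ballI)
    fix u v assume uv: "u \<in> S" "v \<in> S"
    have "f v \<ge> f u + ereal (f' u \<bullet> (v - u))" using subgrad uv by (auto simp: S_def subdiff_def)
    thus "fr v \<ge> fr u + f' u \<bullet> (v - u)" using fre uv by simp
  qed
  have grS: "\<forall>u\<in>S. \<forall>v\<in>S. norm (f' u - f' v) \<le> 2 * Mf + Lf * norm (u - v)" using growth by (simp add: S_def)
  have XS: "X \<in> S" and CS: "C \<in> S" using Xd invi by (auto simp: S_def X_def C_def)
  have kr: "fr X - fr C - f' C \<bullet> (X - C) \<le> 2 * Mf * r + Lf * r^2 / 2"
    using key_real[OF edom_convex[OF h_cvx, folded S_def] CS XS sgr grS Lf_nonneg] by (simp add: r_def)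
  obtain hx where hx: "h X = ereal hx" using XS hpr[rule_format, of X] by (cases "h X") (auto simp: S_def edom_def)
  have linle: "f C + ereal (f' C \<bullet> (X - C)) \<le> F i X" using mok by (auto simp: model_ok_def lin_def C_def)
  have FXf: "F i X \<le> f X" using invi by simp
  obtain Fx where Fx: "F i X = ereal Fx" and Fxge: "Fx \<ge> fr C + f' C \<bullet> (X - C)" and Fxle: "Fx \<le> fr X"
  proof -
    have a: "ereal (fr C + f' C \<bullet> (X - C)) \<le> F i X" using linle fre CS by simp
    have b: "F i X \<le> ereal (fr X)" using FXf fre XS by simp
    show ?thesis using a b that by (cases "F i X") auto
  qed
  have lp: "l > 0" using invi by (simp add: l_def)
  have aeq: "fr X + hx + chi / (2 * l) * r^2 - (Fx + hx + r^2 / (2 * l)) = fr X - Fx - (1 - chi) / (2 * l) * r^2"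
    using lp by (simp add: field_simps)
  have teq: "tval (F i) h (lam i) (c i) (x i) (phibar i)
      = ereal (fr X - Fx - (1 - chi) / (2 * l) * r^2)"
  proof -
    have "tval (F i) h (lam i) (c i) (x i) (phibar i)
      = ereal (fr X + hx + chi / (2 * l) * r^2) - ereal (Fx + hx + r^2 / (2 * l))"
      using Rphi fre[OF XS] hx Fx by (simp add: tval_def vval_def X_def C_def l_def r_def)
    also have "\<dots> = ereal (fr X - Fx - (1 - chi) / (2 * l) * r^2)" using aeq by simp
    finally show ?thesis .
  qed
  have Tle: "fr X - Fx - (1 - chi) / (2 * l) * r^2 \<le> 2 * Mf * r + Lf * r^2 / 2 - (1 - chi) / (2 * l) * r^2"
    using kr Fxge by simp
  have r0: "r \<ge> 0" by (simp add: r_def)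
  show ?thesis
  proof (intro conjI impI allI)
    assume "Lf = 0 \<or> lam i \<le> (1 - chi) / (2 * Lf)"
    hence "2 * Mf * r + Lf * r^2 / 2 - (1 - chi) / (2 * l) * r^2 \<le> 4 * l * Mf^2 / (1 - chi)"
      using ineq_a[OF lp inputs(3) Mf_nonneg Lf_nonneg r0] by (simp add: l_def)
    thus "tval (F i) h (lam i) (c i) (x i) (phibar i) \<le> ereal (4 * lam i * Mf^2 / (1 - chi))"
      using teq Tle by (simp add: l_def)
  next
    fix D :: real
    assume "\<forall>z\<in>edom h. \<forall>y\<in>edom h. norm (z - y) \<le> D"
    hence rD: "r \<le> D" using XS CS by (simp add: S_def r_def)
    have "2 * Mf * r + Lf * r^2 / 2 - (1 - chi) / (2 * l) * r^2 \<le> l * (16 * Mf^2 + Lf^2 * D^2) / (4 * (1 - chi))"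
      using ineq_b[OF lp inputs(3) Mf_nonneg Lf_nonneg r0 rD] .
    thus "tval (F i) h (lam i) (c i) (x i) (phibar i) \<le> ereal (lam i * (16 * Mf^2 + Lf^2 * D^2) / (4 * (1 - chi)))"
      using teq Tle by (simp add: l_def)
  qed
qed

end
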